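(* Let $\Re$ be a commutative Krasner hyperring with identity $1\ne0$, $\phi:L(\Re)\to L(\Re)\cup\{\emptyset\}$ a function, and $T$ a proper $\phi$-primary hyperideal of $\Re$. (i) If $M$ is a hyperideal of $\Re$ with $M\subseteq T$, then $T/M$ is a $\phi_M$-primary hyperideal of $\Re/M$. (ii) If $S$ is a multiplicatively closed subset of $\Re$ with $T\cap S=\emptyset$ and $\phi(T)_S\subseteq\phi_S(T_S)$, then $T_S$ is a $\phi_S$-primary hyperideal of $\Re_S$.
   Context: Krasner hyperring: $(\Re,\oplus)$ canonical hypergroup, $(\Re,\circ)$ commutative semigroup with identity $1\ne0$, $0$ absorbing, distributive. For a hyperideal $M$, $\Re/M=\{a\oplus M\}$ is the quotient hyperring, $N/M=\{a\oplus M: a\in N\}$ for $N\supseteq M$, and $\phi_M(N/M)=(\phi(N)\oplus M)/M$ (or $\emptyset$ if $\phi(N)=\emptyset$). For multiplicatively closed $S$, $\Re_S$ is the localization, $N_S=\{a/s:a\in N,s\in S\}$, and for $J\in L(\Re_S)$, $\phi_S(J)=(\phi(J\cap\Re))_S$ where $J\cap\Re=\{a: a/1\in J\}$ ($\emptyset$ if $\phi(J\cap\Re)=\emptyset$). $N$ is $\psi$-primary if $a\circ b\in N$, $a\circ b\notin\psi(N)$ imply $a\in N$ or $b^k\in N$ for some $k\in\mathbb{N}$. *)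

theory Defs
  imports Main
begin

record 'a hyperring =
  carrier :: "'a set"
  hadd :: "'a \<Rightarrow> 'a \<Rightarrow> 'a set"
  hmul :: "'a \<Rightarrow> 'a \<Rightarrow> 'a"
  hzero :: 'a
  hone :: 'a

definition hneg :: "'a hyperring \<Rightarrow> 'a \<Rightarrow> 'a" where
  "hneg R x = (THE y. y \<in> carrier R \<and> hzero R \<in> hadd R x y)"

definition krasner_hyperring :: "'a hyperring \<Rightarrow> bool" where
  "krasner_hyperring R \<longleftrightarrow>
     hzero R \<in> carrier R \<and> hone R \<in> carrier R \<and> hone R \<noteq> hzero R \<and>
     \<comment> \<open>(R, hadd) canonical hypergroup\<close>
     (\<forall>x\<in>carrier R. \<forall>y\<in>carrier R. hadd R x y \<subseteq> carrier R \<and> hadd R x y \<noteq> {}) \<and>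
     (\<forall>x\<in>carrier R. \<forall>y\<in>carrier R. \<forall>z\<in>carrier R.
        (\<Union>w\<in>hadd R x y. hadd R w z) = (\<Union>w\<in>hadd R y z. hadd R x w)) \<and>
     (\<forall>x\<in>carrier R. \<forall>y\<in>carrier R. hadd R x y = hadd R y x) \<and>
     (\<forall>x\<in>carrier R. hadd R (hzero R) x = {x}) \<and>
     (\<forall>x\<in>carrier R. \<exists>!y. y \<in> carrier R \<and> hzero R \<in> hadd R x y) \<and>
     (\<forall>x\<in>carrier R. \<forall>y\<in>carrier R. \<forall>z\<in>carrier R.
        z \<in> hadd R x y \<longrightarrow> y \<in> hadd R z (hneg R x) \<and> x \<in> hadd R z (hneg R y)) \<and>
     \<comment> \<open>(R, hmul) commutative semigroup with identity, zero absorbing\<close>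
     (\<forall>x\<in>carrier R. \<forall>y\<in>carrier R. hmul R x y \<in> carrier R) \<and>
     (\<forall>x\<in>carrier R. \<forall>y\<in>carrier R. \<forall>z\<in>carrier R.
        hmul R (hmul R x y) z = hmul R x (hmul R y z)) \<and>
     (\<forall>x\<in>carrier R. \<forall>y\<in>carrier R. hmul R x y = hmul R y x) \<and>
     (\<forall>x\<in>carrier R. hmul R (hone R) x = x) \<and>
     (\<forall>x\<in>carrier R. hmul R (hzero R) x = hzero R) \<and>
     \<comment> \<open>distributivity\<close>
     (\<forall>x\<in>carrier R. \<forall>y\<in>carrier R. \<forall>z\<in>carrier R.
        hmul R x ` hadd R y z = hadd R (hmul R x y) (hmul R x z))"

definition hyperideal :: "'a hyperring \<Rightarrow> 'a set \<Rightarrow> bool" where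
  "hyperideal R N \<longleftrightarrow> N \<subseteq> carrier R \<and> N \<noteq> {} \<and>
     (\<forall>a\<in>N. \<forall>b\<in>N. hadd R a (hneg R b) \<subseteq> N) \<and>
     (\<forall>r\<in>carrier R. \<forall>a\<in>N. hmul R r a \<in> N)"

fun hpow :: "'a hyperring \<Rightarrow> 'a \<Rightarrow> nat \<Rightarrow> 'a" where
  "hpow R b 0 = hone R"
| "hpow R b (Suc k) = hmul R b (hpow R b k)"

text \<open>\<open>\<psi>\<close>-primary hyperideal (as in the paper's definition; properness is stated separately).\<close>
definition phi_primary :: "'a hyperring \<Rightarrow> ('a set \<Rightarrow> 'a set) \<Rightarrow> 'a set \<Rightarrow> bool" where
  "phi_primary R \<psi> N \<longleftrightarrow> hyperideal R N \<and>
     (\<forall>a\<in>carrier R. \<forall>b\<in>carrier R.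
        hmul R a b \<in> N \<and> hmul R a b \<notin> \<psi> N \<longrightarrow> a \<in> N \<or> (\<exists>k\<ge>1. hpow R b k \<in> N))"

definition reduction_fun :: "'a hyperring \<Rightarrow> ('a set \<Rightarrow> 'a set) \<Rightarrow> bool" where
  "reduction_fun R \<phi> \<longleftrightarrow> (\<forall>N. hyperideal R N \<longrightarrow> \<phi> N = {} \<or> hyperideal R (\<phi> N))"

definition coset :: "'a hyperring \<Rightarrow> 'a set \<Rightarrow> 'a \<Rightarrow> 'a set" where
  "coset R M a = (\<Union>m\<in>M. hadd R a m)"

definition quot_hyperring :: "'a hyperring \<Rightarrow> 'a set \<Rightarrow> 'a set hyperring" where
  "quot_hyperring R M =
    \<lparr> carrier = {coset R M a | a. a \<in> carrier R},
      hadd = (\<lambda>X Y. {coset R M c | a b c. a \<in> carrier R \<and> b \<in> carrier R \<and>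
                        X = coset R M a \<and> Y = coset R M b \<and> c \<in> hadd R a b}),
      hmul = (\<lambda>X Y. coset R M (hmul R (SOME a. a \<in> carrier R \<and> X = coset R M a)
                                       (SOME b. b \<in> carrier R \<and> Y = coset R M b))),
      hzero = coset R M (hzero R),
      hone = coset R M (hone R) \<rparr>"

definition quot_set :: "'a hyperring \<Rightarrow> 'a set \<Rightarrow> 'a set \<Rightarrow> 'a set set" where
  "quot_set R M N = {coset R M a | a. a \<in> N}"

text \<open>\<open>\<phi>\<^sub>M(N/M) = (\<phi>(N) \<oplus> M)/M\<close>, where N is recovered from \<open>J = N/M\<close> as the preimage
  of J under the canonical projection.\<close>
definition phi_quot :: "'a hyperring \<Rightarrow> 'a set \<Rightarrow> ('a set \<Rightarrow> 'a set) \<Rightarrow> 'a set set \<Rightarrow> 'a set set" where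
  "phi_quot R M \<phi> J =
    (let N = {a \<in> carrier R. coset R M a \<in> J} in
     if \<phi> N = {} then {}
     else quot_set R M (\<Union>a\<in>\<phi> N. \<Union>m\<in>M. hadd R a m))"

definition mult_closed :: "'a hyperring \<Rightarrow> 'a set \<Rightarrow> bool" where
  "mult_closed R S \<longleftrightarrow> S \<subseteq> carrier R \<and> hone R \<in> S \<and>
     (\<forall>s\<in>S. \<forall>t\<in>S. hmul R s t \<in> S)"

text \<open>The fraction \<open>a/s\<close>: equivalence class of (a,s), where
  \<open>(a,s) ~ (b,t)\<close> iff \<open>u(at) = u(bs)\<close> for some \<open>u \<in> S\<close>.\<close>
definition frac :: "'a hyperring \<Rightarrow> 'a set \<Rightarrow> 'a \<Rightarrow> 'a \<Rightarrow> ('a \<times> 'a) set" where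
  "frac R S a s = {(b, t). b \<in> carrier R \<and> t \<in> S \<and>
      (\<exists>u\<in>S. hmul R u (hmul R a t) = hmul R u (hmul R b s))}"

definition localization :: "'a hyperring \<Rightarrow> 'a set \<Rightarrow> ('a \<times> 'a) set hyperring" where
  "localization R S =
    \<lparr> carrier = {frac R S a s | a s. a \<in> carrier R \<and> s \<in> S},
      hadd = (\<lambda>X Y. {frac R S c (hmul R s t) | a s b t c.
                       a \<in> carrier R \<and> s \<in> S \<and> b \<in> carrier R \<and> t \<in> S \<and>
                       X = frac R S a s \<and> Y = frac R S b t \<and>
                       c \<in> hadd R (hmul R a t) (hmul R b s)}),
      hmul = (\<lambda>X Y. (let (a, s) = (SOME p. fst p \<in> carrier R \<and> snd p \<in> S \<and> X = frac R S (fst p) (snd p));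
                          (b, t) = (SOME p. fst p \<in> carrier R \<and> snd p \<in> S \<and> Y = frac R S (fst p) (snd p))
                      in frac R S (hmul R a b) (hmul R s t))),
      hzero = frac R S (hzero R) (hone R),
      hone = frac R S (hone R) (hone R) \<rparr>"

definition loc_set :: "'a hyperring \<Rightarrow> 'a set \<Rightarrow> 'a set \<Rightarrow> ('a \<times> 'a) set set" where
  "loc_set R S N = {frac R S a s | a s. a \<in> N \<and> s \<in> S}"

definition contract :: "'a hyperring \<Rightarrow> 'a set \<Rightarrow> ('a \<times> 'a) set set \<Rightarrow> 'a set" where
  "contract R S J = {a \<in> carrier R. frac R S a (hone R) \<in> J}"

definition phi_loc :: "'a hyperring \<Rightarrow> 'a set \<Rightarrow> ('a set \<Rightarrow> 'a set) \<Rightarrow> ('a \<times> 'a) set set \<Rightarrow> ('a \<times> 'a) set set" where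
  "phi_loc R S \<phi> J = (if \<phi> (contract R S J) = {} then {} else loc_set R S (\<phi> (contract R S J)))"

end

theory Submission
  imports Defs
begin

locale kh =
  fixes R :: "'a hyperring"
  assumes KH: "krasner_hyperring R"
begin

abbreviation "C \<equiv> carrier R"
abbreviation "add \<equiv> hadd R"
abbreviation "mul \<equiv> hmul R"
abbreviation "neg \<equiv> hneg R"
abbreviation "zero \<equiv> hzero R"
abbreviation "one \<equiv> hone R"

lemma zero_in[simp]: "zero \<in> C" using KH[unfolded krasner_hyperring_def, THEN conjunct1] by blast
lemma one_in[simp]: "one \<in> C" using KH[unfolded krasner_hyperring_def, THEN conjunct2, THEN conjunct1] by blast
lemma add_sub: "x \<in> C \<Longrightarrow> y \<in> C \<Longrightarrow> add x y \<subseteq> C"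
  using KH[unfolded krasner_hyperring_def, THEN conjunct2, THEN conjunct2, THEN conjunct2, THEN conjunct1] by blast
lemma add_mem: "z \<in> add x y \<Longrightarrow> x \<in> C \<Longrightarrow> y \<in> C \<Longrightarrow> z \<in> C"
  using add_sub by blast
lemma add_ne: "x \<in> C \<Longrightarrow> y \<in> C \<Longrightarrow> add x y \<noteq> {}"
  using KH[unfolded krasner_hyperring_def, THEN conjunct2, THEN conjunct2, THEN conjunct2, THEN conjunct1] by blast
lemma add_assoc: "x \<in> C \<Longrightarrow> y \<in> C \<Longrightarrow> z \<in> C \<Longrightarrow>
   (\<Union>w\<in>add x y. add w z) = (\<Union>w\<in>add y z. add x w)"
  by (rule KH[unfolded krasner_hyperring_def, THEN conjunct2, THEN conjunct2, THEN conjunct2, THEN conjunct2, THEN conjunct1, rule_format])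
lemma add_comm: "x \<in> C \<Longrightarrow> y \<in> C \<Longrightarrow> add x y = add y x"
  by (rule KH[unfolded krasner_hyperring_def, THEN conjunct2, THEN conjunct2, THEN conjunct2, THEN conjunct2, THEN conjunct2, THEN conjunct1, rule_format])
lemma zero_add: "x \<in> C \<Longrightarrow> add zero x = {x}"
  using KH[unfolded krasner_hyperring_def, THEN conjunct2, THEN conjunct2, THEN conjunct2, THEN conjunct2, THEN conjunct2, THEN conjunct2, THEN conjunct1] by blast
lemma add_zero: "x \<in> C \<Longrightarrow> add x zero = {x}"
  using zero_add add_comm by simp
lemma neg_ex1: "x \<in> C \<Longrightarrow> \<exists>!y. y \<in> C \<and> zero \<in> add x y"
  using KH[unfolded krasner_hyperring_def, THEN conjunct2, THEN conjunct2, THEN conjunct2, THEN conjunct2, THEN conjunct2, THEN conjunct2, THEN conjunct2, THEN conjunct1] by blast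
lemma neg_prop: "x \<in> C \<Longrightarrow> neg x \<in> C \<and> zero \<in> add x (neg x)"
  unfolding hneg_def by (rule theI', rule neg_ex1)
lemma neg_in[simp]: "x \<in> C \<Longrightarrow> neg x \<in> C" using neg_prop by blast
lemma neg_zero_mem: "x \<in> C \<Longrightarrow> zero \<in> add x (neg x)" using neg_prop by blast
lemma neg_unique: "x \<in> C \<Longrightarrow> y \<in> C \<Longrightarrow> zero \<in> add x y \<Longrightarrow> y = neg x"
proof -
  assume x: "x \<in> C" and y: "y \<in> C" "zero \<in> add x y"
  obtain z where z: "z \<in> C \<and> zero \<in> add x z" "\<And>w. w \<in> C \<and> zero \<in> add x w \<Longrightarrow> w = z"
    using neg_ex1[OF x] by (elim ex1E) blast
  have "y = z" using z(2) y by blast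
  moreover have "neg x = z" using z(2) neg_prop[OF x] by blast
  ultimately show ?thesis by simp
qed
lemma neg_neg[simp]: "x \<in> C \<Longrightarrow> neg (neg x) = x"
proof -
  assume x: "x \<in> C"
  have "zero \<in> add (neg x) x" using neg_zero_mem[OF x] add_comm[OF x] x by simp
  then have "x = neg (neg x)" using neg_unique[of "neg x" x] x neg_in[OF x] by blast
  then show ?thesis by simp
qed
lemma reversib: "x \<in> C \<Longrightarrow> y \<in> C \<Longrightarrow> z \<in> C \<Longrightarrow> z \<in> add x y \<Longrightarrow>
    y \<in> add z (neg x) \<and> x \<in> add z (neg y)"
  by (rule KH[unfolded krasner_hyperring_def, THEN conjunct2, THEN conjunct2, THEN conjunct2, THEN conjunct2, THEN conjunct2, THEN conjunct2, THEN conjunct2, THEN conjunct2, THEN conjunct1, rule_format])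
lemma mul_in[simp]: "x \<in> C \<Longrightarrow> y \<in> C \<Longrightarrow> mul x y \<in> C"
  using KH[unfolded krasner_hyperring_def, THEN conjunct2, THEN conjunct2, THEN conjunct2, THEN conjunct2, THEN conjunct2, THEN conjunct2, THEN conjunct2, THEN conjunct2, THEN conjunct2, THEN conjunct1] by blast
lemma mul_assoc: "x \<in> C \<Longrightarrow> y \<in> C \<Longrightarrow> z \<in> C \<Longrightarrow> mul (mul x y) z = mul x (mul y z)"
  by (rule KH[unfolded krasner_hyperring_def, THEN conjunct2, THEN conjunct2, THEN conjunct2, THEN conjunct2, THEN conjunct2, THEN conjunct2, THEN conjunct2, THEN conjunct2, THEN conjunct2, THEN conjunct2, THEN conjunct1, rule_format])
lemma mul_comm: "x \<in> C \<Longrightarrow> y \<in> C \<Longrightarrow> mul x y = mul y x"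
  by (rule KH[unfolded krasner_hyperring_def, THEN conjunct2, THEN conjunct2, THEN conjunct2, THEN conjunct2, THEN conjunct2, THEN conjunct2, THEN conjunct2, THEN conjunct2, THEN conjunct2, THEN conjunct2, THEN conjunct2, THEN conjunct1, rule_format])
lemma mul_lcomm: "x \<in> C \<Longrightarrow> y \<in> C \<Longrightarrow> z \<in> C \<Longrightarrow> mul x (mul y z) = mul y (mul x z)"
proof -
  assume a: "x \<in> C" "y \<in> C" "z \<in> C"
  have "mul x (mul y z) = mul (mul x y) z" using mul_assoc a by simp
  also have "... = mul (mul y x) z" using mul_comm a by simp
  also have "... = mul y (mul x z)" using mul_assoc a by simp
  finally show ?thesis .
qed
lemmas mul_ac = mul_assoc mul_comm mul_lcomm
lemma one_mul[simp]: "x \<in> C \<Longrightarrow> mul one x = x"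
  using KH[unfolded krasner_hyperring_def, THEN conjunct2, THEN conjunct2, THEN conjunct2, THEN conjunct2, THEN conjunct2, THEN conjunct2, THEN conjunct2, THEN conjunct2, THEN conjunct2, THEN conjunct2, THEN conjunct2, THEN conjunct2, THEN conjunct1] by blast
lemma mul_one[simp]: "x \<in> C \<Longrightarrow> mul x one = x"
  using one_mul mul_comm by simp
lemma zero_mul[simp]: "x \<in> C \<Longrightarrow> mul zero x = zero"
  using KH[unfolded krasner_hyperring_def, THEN conjunct2, THEN conjunct2, THEN conjunct2, THEN conjunct2, THEN conjunct2, THEN conjunct2, THEN conjunct2, THEN conjunct2, THEN conjunct2, THEN conjunct2, THEN conjunct2, THEN conjunct2, THEN conjunct2, THEN conjunct1] by blast
lemma mul_zero[simp]: "x \<in> C \<Longrightarrow> mul x zero = zero"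
  using zero_mul mul_comm by simp
lemma distrib: "x \<in> C \<Longrightarrow> y \<in> C \<Longrightarrow> z \<in> C \<Longrightarrow> mul x ` add y z = add (mul x y) (mul x z)"
  by (rule KH[unfolded krasner_hyperring_def, THEN conjunct2, THEN conjunct2, THEN conjunct2, THEN conjunct2, THEN conjunct2, THEN conjunct2, THEN conjunct2, THEN conjunct2, THEN conjunct2, THEN conjunct2, THEN conjunct2, THEN conjunct2, THEN conjunct2, THEN conjunct2, rule_format])

lemma assoc_elem: "x \<in> C \<Longrightarrow> y \<in> C \<Longrightarrow> n \<in> C \<Longrightarrow> w \<in> add x y \<Longrightarrow> z \<in> add w n \<Longrightarrow>
   \<exists>v\<in>add y n. z \<in> add x v"
proof -
  assume a: "x \<in> C" "y \<in> C" "n \<in> C" "w \<in> add x y" "z \<in> add w n"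
  have "z \<in> (\<Union>w\<in>add x y. add w n)" using a(4,5) by (rule UN_I)
  then have "z \<in> (\<Union>v\<in>add y n. add x v)" using add_assoc[OF a(1-3)] by simp
  then show ?thesis by (rule UN_E) (rule bexI)
qed

lemma mul_neg: "x \<in> C \<Longrightarrow> y \<in> C \<Longrightarrow> mul x (neg y) = neg (mul x y)"
proof -
  assume a: "x \<in> C" "y \<in> C"
  have "mul x zero \<in> mul x ` add y (neg y)" using neg_zero_mem[OF a(2)] by blast
  then have "zero \<in> add (mul x y) (mul x (neg y))" using distrib[of x y "neg y"] a by simp
  then show ?thesis using neg_unique[of "mul x y" "mul x (neg y)"] a mul_in[OF a] mul_in[OF a(1) neg_in[OF a(2)]] by blast
qed

lemma mul_add_mem: "x \<in> C \<Longrightarrow> y \<in> C \<Longrightarrow> z \<in> C \<Longrightarrow> c \<in> add y z \<Longrightarrow> mul x c \<in> add (mul x y) (mul x z)"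
proof -
  assume a: "x \<in> C" "y \<in> C" "z \<in> C" "c \<in> add y z"
  have "mul x c \<in> mul x ` add y z" using a(4) by (rule imageI)
  then show ?thesis using distrib[OF a(1-3)] by simp
qed

lemma hpow_in[simp]: "b \<in> C \<Longrightarrow> hpow R b k \<in> C"
  by (induction k) auto

lemma hi_sub: "hyperideal R N \<Longrightarrow> N \<subseteq> C" unfolding hyperideal_def by blast
lemma hi_zero: "hyperideal R N \<Longrightarrow> zero \<in> N"
proof -
  assume h: "hyperideal R N"
  then obtain m where m: "m \<in> N" unfolding hyperideal_def by blast
  then have "add m (neg m) \<subseteq> N" using h unfolding hyperideal_def by blast
  moreover have "m \<in> C" using m hi_sub[OF h] by blast
  ultimately show ?thesis using neg_zero_mem by blast
qed
lemma hi_neg: "hyperideal R N \<Longrightarrow> a \<in> N \<Longrightarrow> neg a \<in> N"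
proof -
  assume h: "hyperideal R N" and a: "a \<in> N"
  have z: "zero \<in> N" using hi_zero[OF h] .
  have "add zero (neg a) \<subseteq> N" using z a h unfolding hyperideal_def by blast
  moreover have "a \<in> C" using a hi_sub[OF h] by blast
  then have "add zero (neg a) = {neg a}" using zero_add[of "neg a"] by simp
  ultimately show ?thesis by simp
qed
lemma hi_add: "hyperideal R N \<Longrightarrow> a \<in> N \<Longrightarrow> b \<in> N \<Longrightarrow> add a b \<subseteq> N"
proof -
  assume h: "hyperideal R N" and a: "a \<in> N" "b \<in> N"
  have "neg b \<in> N" using hi_neg[OF h a(2)] .
  then have "add a (neg (neg b)) \<subseteq> N" using h a unfolding hyperideal_def by blast
  moreover have "neg (neg b) = b" using a hi_sub[OF h] by auto
  ultimately show ?thesis by (simp only:)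
qed
lemma hi_mul: "hyperideal R N \<Longrightarrow> r \<in> C \<Longrightarrow> a \<in> N \<Longrightarrow> mul r a \<in> N"
  unfolding hyperideal_def by blast
lemma hi_mul2: "hyperideal R N \<Longrightarrow> r \<in> C \<Longrightarrow> a \<in> N \<Longrightarrow> mul a r \<in> N"
proof -
  assume h: "hyperideal R N" "r \<in> C" "a \<in> N"
  have "a \<in> C" using h hi_sub by blast
  then have "mul a r = mul r a" using mul_comm h(2) by simp
  then show ?thesis using hi_mul[OF h] by simp
qed

end

locale khM = kh +
  fixes M :: "'a set"
  assumes HM: "hyperideal R M"
begin

abbreviation "cs \<equiv> coset R M"
abbreviation "Q \<equiv> quot_hyperring R M"

lemma M_sub: "M \<subseteq> C" using hi_sub[OF HM] .
lemma M_zero: "zero \<in> M" using hi_zero[OF HM] .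

lemma cs_iff: "z \<in> cs y \<longleftrightarrow> (\<exists>m\<in>M. z \<in> add y m)"
  unfolding coset_def by blast

lemma cs_self: "a \<in> C \<Longrightarrow> a \<in> cs a"
  using M_zero add_zero[of a] unfolding cs_iff by blast

lemma cs_sub1: "y \<in> C \<Longrightarrow> m \<in> M \<Longrightarrow> x \<in> add y m \<Longrightarrow> cs x \<subseteq> cs y"
proof
  fix z assume a: "y \<in> C" "m \<in> M" "x \<in> add y m" and z: "z \<in> cs x"
  then obtain n where n: "n \<in> M" "z \<in> add x n" unfolding cs_iff by blast
  have mC: "m \<in> C" "n \<in> C" using a(2) n(1) M_sub by auto
  obtain v where v: "v \<in> add m n" "z \<in> add y v"
    using assoc_elem[OF a(1) mC a(3) n(2)] by blast
  have "v \<in> M" using hi_add[OF HM a(2) n(1)] v(1) by blast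
  then show "z \<in> cs y" using v(2) unfolding cs_iff by blast
qed

lemma cs_eq1: "y \<in> C \<Longrightarrow> m \<in> M \<Longrightarrow> x \<in> add y m \<Longrightarrow> cs x = cs y"
proof
  assume a: "y \<in> C" "m \<in> M" "x \<in> add y m"
  then show "cs x \<subseteq> cs y" by (rule cs_sub1)
  have mC: "m \<in> C" using a(2) M_sub by auto
  have xC: "x \<in> C" using add_mem[OF a(3) a(1) mC] .
  have "y \<in> add x (neg m)" using reversib[OF a(1) mC xC a(3)] by blast
  moreover have "neg m \<in> M" using hi_neg[OF HM a(2)] .
  ultimately show "cs y \<subseteq> cs x" using cs_sub1[OF xC] by blast
qed

lemma cs_eq: "y \<in> C \<Longrightarrow> z \<in> cs y \<Longrightarrow> cs z = cs y"
  using cs_eq1 unfolding cs_iff by blast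

lemma cs_eqD: "x \<in> C \<Longrightarrow> cs x = cs y \<Longrightarrow> x \<in> cs y"
  using cs_self by blast

lemma cs_zero: "cs zero = M"
proof -
  have "add zero m = {m}" if "m \<in> M" for m using zero_add that M_sub by blast
  then show ?thesis unfolding coset_def by auto
qed

lemma cs_in_T: "hyperideal R T \<Longrightarrow> M \<subseteq> T \<Longrightarrow> t \<in> T \<Longrightarrow> x \<in> cs t \<Longrightarrow> x \<in> T"
  using hi_add unfolding cs_iff by blast

lemma cs_mul: "a \<in> C \<Longrightarrow> a' \<in> C \<Longrightarrow> b \<in> C \<Longrightarrow> cs a' = cs a \<Longrightarrow> cs (mul a' b) = cs (mul a b)"
proof -
  assume a: "a \<in> C" "a' \<in> C" "b \<in> C" "cs a' = cs a"
  then obtain m where m: "m \<in> M" "a' \<in> add a m" using cs_eqD[of a' a] unfolding cs_iff by blast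
  have mC: "m \<in> C" using m M_sub by auto
  have "mul b a' \<in> add (mul b a) (mul b m)" using mul_add_mem[OF a(3) a(1) mC m(2)] .
  moreover have "mul b m \<in> M" using hi_mul[OF HM a(3) m(1)] .
  ultimately have "cs (mul b a') = cs (mul b a)" using cs_eq1 a by simp
  then show ?thesis using mul_comm a by simp
qed

lemma QC: "carrier Q = {cs a | a. a \<in> C}" unfolding quot_hyperring_def by simp

lemma Q_rep: "X \<in> carrier Q \<Longrightarrow> \<exists>a. a \<in> C \<and> X = cs a" unfolding QC by blast

lemma Q_some: "a \<in> C \<Longrightarrow> (SOME a'. a' \<in> C \<and> cs a = cs a') \<in> C \<and> cs a = cs (SOME a'. a' \<in> C \<and> cs a = cs a')"
  by (rule someI[where x=a]) simp

lemma Q_mul: "a \<in> C \<Longrightarrow> b \<in> C \<Longrightarrow> hmul Q (cs a) (cs b) = cs (mul a b)"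
proof -
  assume a: "a \<in> C" "b \<in> C"
  define a' where "a' = (SOME a'. a' \<in> C \<and> cs a = cs a')"
  define b' where "b' = (SOME b'. b' \<in> C \<and> cs b = cs b')"
  have a': "a' \<in> C" "cs a = cs a'" using Q_some[OF a(1)] unfolding a'_def by auto
  have b': "b' \<in> C" "cs b = cs b'" using Q_some[OF a(2)] unfolding b'_def by auto
  have "hmul Q (cs a) (cs b) = cs (mul a' b')" unfolding quot_hyperring_def a'_def b'_def by simp
  also have "\<dots> = cs (mul a b')" using cs_mul[of a a' b'] a a' b' by simp
  also have "\<dots> = cs (mul b' a)" using mul_comm a b' by simp
  also have "\<dots> = cs (mul b a)" using cs_mul[of b b' a] a b' by simp
  also have "\<dots> = cs (mul a b)" using mul_comm a by simp
  finally show ?thesis .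
qed

lemma Q_add: "hadd Q X Y = {cs c | a b c. a \<in> C \<and> b \<in> C \<and> X = cs a \<and> Y = cs b \<and> c \<in> add a b}"
  unfolding quot_hyperring_def by simp

lemma Q_zero: "hzero Q = cs zero" unfolding quot_hyperring_def by simp
lemma Q_one: "hone Q = cs one" unfolding quot_hyperring_def by simp

lemma Q_neg: assumes a: "a \<in> C" shows "hneg Q (cs a) = cs (neg a)"
proof -
  have na: "neg a \<in> C" using neg_in[OF a] .
  have E: "cs (neg a) \<in> carrier Q \<and> hzero Q \<in> hadd Q (cs a) (cs (neg a))"
  proof
    show "cs (neg a) \<in> carrier Q" unfolding QC using na by blast
  next
    show "hzero Q \<in> hadd Q (cs a) (cs (neg a))"
      unfolding Q_add Q_zero using a na neg_zero_mem[OF a] by blast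
  qed
  have U: "Y = cs (neg a)" if Y: "Y \<in> carrier Q \<and> hzero Q \<in> hadd Q (cs a) Y" for Y
  proof -
  from Y obtain a' b' c where h: "a' \<in> C" "b' \<in> C" "cs a = cs a'" "Y = cs b'" "c \<in> add a' b'" "cs zero = cs c"
    unfolding Q_add Q_zero by blast
  have "c \<in> C" using add_mem[OF h(5) h(1,2)] .
  then have "c \<in> cs c" by (rule cs_self)
  then have cM: "c \<in> M" using h(6) cs_zero by simp
  have cC: "c \<in> C" using cM M_sub by auto
  obtain m where m: "m \<in> M" "a' \<in> add a m" using cs_eqD[OF h(1) h(3)[symmetric]] unfolding cs_iff by blast
  have mC: "m \<in> C" using m M_sub by auto
  obtain v where v: "v \<in> add m b'" "c \<in> add a v" using assoc_elem[OF a mC h(2) m(2) h(5)] by blast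
  have vC: "v \<in> C" using add_mem[OF v(1) mC h(2)] .
  have "v \<in> add c (neg a)" using reversib[OF a vC cC v(2)] by blast
  then have "v \<in> add (neg a) c" using add_comm[of c "neg a"] cC a by simp
  then have 1: "cs v = cs (neg a)" by (rule cs_eq1[OF neg_in[OF a] cM])
  have "v \<in> add b' m" using v(1) add_comm[OF mC h(2)] by simp
  then have "cs v = cs b'" by (rule cs_eq1[OF h(2) m(1)])
  then show "Y = cs (neg a)" using 1 h(4) by simp
  qed
  show ?thesis unfolding hneg_def[of Q]
    by (rule the_equality[where P="\<lambda>Y. Y \<in> carrier Q \<and> hzero Q \<in> hadd Q (cs a) Y", OF E U])
qed

lemma Q_pow: "b \<in> C \<Longrightarrow> hpow Q (cs b) k = cs (hpow R b k)"
proof (induction k)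
  case 0 then show ?case using Q_one by simp
next
  case (Suc k) then show ?case using Q_mul[of b "hpow R b k"] by simp
qed

theorem part1:
  assumes PT: "phi_primary R \<phi> T" and MT: "M \<subseteq> T"
  shows "phi_primary Q (phi_quot R M \<phi>) (quot_set R M T)"
proof -
  have HT: "hyperideal R T" using PT unfolding phi_primary_def by blast
  have TC: "T \<subseteq> C" using hi_sub[OF HT] .
  have QT: "X \<in> quot_set R M T \<longleftrightarrow> (\<exists>t\<in>T. X = cs t)" for X unfolding quot_set_def by blast
  have inT: "x \<in> T" if "x \<in> C" "cs x \<in> quot_set R M T" for x
  proof -
    from that(2) obtain t where t: "t \<in> T" "cs x = cs t" unfolding quot_set_def by blast
    have "x \<in> cs t" using cs_eqD[OF that(1) t(2)] .
    then show ?thesis by (rule cs_in_T[OF HT MT t(1)])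
  qed
  have NT: "{a \<in> C. cs a \<in> quot_set R M T} = T"
  proof (intro equalityI subsetI)
    fix x assume "x \<in> {a \<in> C. cs a \<in> quot_set R M T}"
    then show "x \<in> T" using inT by blast
  next
    fix x assume x: "x \<in> T"
    then have "cs x \<in> quot_set R M T" unfolding quot_set_def by blast
    then show "x \<in> {a \<in> C. cs a \<in> quot_set R M T}" using x TC by blast
  qed
  have hi: "hyperideal Q (quot_set R M T)"
    unfolding hyperideal_def
  proof (intro conjI ballI)
    show "quot_set R M T \<subseteq> carrier Q" unfolding QC quot_set_def using TC by blast
    show "quot_set R M T \<noteq> {}" using hi_zero[OF HT] QT by blast
  next
    fix X Y assume X: "X \<in> quot_set R M T" and Y: "Y \<in> quot_set R M T"
    obtain a where a: "a \<in> T" "X = cs a" using X QT by blast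
    obtain b where b: "b \<in> T" "Y = cs b" using Y QT by blast
    have aC: "a \<in> C" and bC: "b \<in> C" using a b TC by auto
    have nb: "neg b \<in> T" using hi_neg[OF HT b(1)] .
    show "hadd Q X (hneg Q Y) \<subseteq> quot_set R M T"
    proof
      fix Z assume "Z \<in> hadd Q X (hneg Q Y)"
      then have "Z \<in> hadd Q (cs a) (cs (neg b))" using a(2) b(2) Q_neg[OF bC] by simp
      then obtain a' b' c where h: "a' \<in> C" "b' \<in> C" "cs a = cs a'" "cs (neg b) = cs b'" "c \<in> add a' b'" "Z = cs c"
        unfolding Q_add by blast
      have "a' \<in> cs a" using cs_eqD[OF h(1) h(3)[symmetric]] .
      then have "a' \<in> T" by (rule cs_in_T[OF HT MT a(1)])
      moreover have "b' \<in> cs (neg b)" using cs_eqD[OF h(2) h(4)[symmetric]] .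
      then have "b' \<in> T" by (rule cs_in_T[OF HT MT nb])
      ultimately have "c \<in> T" using hi_add[OF HT] h(5) by blast
      then show "Z \<in> quot_set R M T" using h(6) QT by blast
    qed
  next
    fix r X assume r: "r \<in> carrier Q" and X: "X \<in> quot_set R M T"
    obtain a where a: "a \<in> C" "r = cs a" using Q_rep[OF r] by blast
    obtain t where t: "t \<in> T" "X = cs t" using X QT by blast
    have tC: "t \<in> C" using t(1) TC by blast
    have "hmul Q r X = cs (mul a t)" using Q_mul[OF a(1) tC] a(2) t(2) by simp
    moreover have "mul a t \<in> T" using hi_mul[OF HT a(1) t(1)] .
    ultimately show "hmul Q r X \<in> quot_set R M T" using QT by blast
  qed
  show ?thesis unfolding phi_primary_def
  proof (intro conjI hi ballI impI)
    fix X Y assume X: "X \<in> carrier Q" and Y: "Y \<in> carrier Q"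
      and h: "hmul Q X Y \<in> quot_set R M T \<and> hmul Q X Y \<notin> phi_quot R M \<phi> (quot_set R M T)"
    obtain a where a: "a \<in> C" "X = cs a" using Q_rep[OF X] by blast
    obtain b where b: "b \<in> C" "Y = cs b" using Q_rep[OF Y] by blast
    have XY: "hmul Q X Y = cs (mul a b)" using Q_mul a b by simp
    have abT: "mul a b \<in> T" using inT[of "mul a b"] h XY a b by simp
    have abphi: "mul a b \<notin> \<phi> T"
    proof
      assume ab: "mul a b \<in> \<phi> T"
      then have ne: "\<phi> T \<noteq> {}" by blast
      have "mul a b \<in> add (mul a b) zero" using add_zero a b by simp
      then have "cs (mul a b) \<in> quot_set R M (\<Union>a\<in>\<phi> T. \<Union>m\<in>M. add a m)"
        unfolding quot_set_def using ab M_zero by blast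
      then have "cs (mul a b) \<in> phi_quot R M \<phi> (quot_set R M T)"
        unfolding phi_quot_def Let_def NT using ne by simp
      then show False using h XY by simp
    qed
    have "a \<in> T \<or> (\<exists>k\<ge>1. hpow R b k \<in> T)"
      using PT a b abT abphi unfolding phi_primary_def by blast
    then show "X \<in> quot_set R M T \<or> (\<exists>k\<ge>1. hpow Q Y k \<in> quot_set R M T)"
      using a b Q_pow QT by auto
  qed
qed

end

locale khS = kh +
  fixes S :: "'a set"
  assumes MS: "mult_closed R S"
begin

abbreviation "fr \<equiv> frac R S"
abbreviation "L \<equiv> localization R S"

lemma S_C: "s \<in> S \<Longrightarrow> s \<in> C" using MS unfolding mult_closed_def by blast
lemma one_S: "one \<in> S" using MS unfolding mult_closed_def by blast
lemma mul_S: "s \<in> S \<Longrightarrow> t \<in> S \<Longrightarrow> mul s t \<in> S" using MS unfolding mult_closed_def by blast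

lemma fr_mem: "(b, t) \<in> fr a s \<longleftrightarrow> b \<in> C \<and> t \<in> S \<and> (\<exists>u\<in>S. mul u (mul a t) = mul u (mul b s))"
  unfolding frac_def by simp

lemma rel_refl: "a \<in> C \<Longrightarrow> s \<in> S \<Longrightarrow> (a, s) \<in> fr a s"
  unfolding fr_mem using one_S by blast

lemma rel_eucl:
  assumes C: "a \<in> C" "b \<in> C" "c \<in> C" "s \<in> S" "t \<in> S" "w \<in> S"
    and u: "u \<in> S" "mul u (mul a t) = mul u (mul b s)"
    and v: "v \<in> S" "mul v (mul a w) = mul v (mul c s)"
  shows "\<exists>z\<in>S. mul z (mul b w) = mul z (mul c t)"
proof -
  have CC: "s \<in> C" "t \<in> C" "w \<in> C" "u \<in> C" "v \<in> C" using C u v S_C by auto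
  have "mul (mul u (mul v s)) (mul b w) = mul (mul v w) (mul u (mul b s))"
    using C CC by (simp add: mul_ac)
  also have "\<dots> = mul (mul v w) (mul u (mul a t))" using u by simp
  also have "\<dots> = mul (mul u t) (mul v (mul a w))" using C CC by (simp add: mul_ac)
  also have "\<dots> = mul (mul u t) (mul v (mul c s))" using v by simp
  also have "\<dots> = mul (mul u (mul v s)) (mul c t)" using C CC by (simp add: mul_ac)
  finally show ?thesis using mul_S[OF u(1) mul_S[OF v(1) C(4)]] by blast
qed

lemma fr_eq: assumes "a \<in> C" "b \<in> C" "s \<in> S" "t \<in> S"
  shows "fr a s = fr b t \<longleftrightarrow> (\<exists>u\<in>S. mul u (mul a t) = mul u (mul b s))"
proof
  assume "fr a s = fr b t"
  then have "(a, s) \<in> fr b t" using rel_refl assms by blast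
  then obtain u where u: "u \<in> S" "mul u (mul b s) = mul u (mul a t)" unfolding fr_mem by blast
  then show "\<exists>u\<in>S. mul u (mul a t) = mul u (mul b s)" by metis
next
  assume "\<exists>u\<in>S. mul u (mul a t) = mul u (mul b s)"
  then obtain u where u: "u \<in> S" "mul u (mul a t) = mul u (mul b s)" by blast
  show "fr a s = fr b t"
  proof (intro set_eqI)
    fix p :: "'a \<times> 'a"
    obtain c w :: 'a where p: "p = (c, w)" by (cases p) blast
    have "(c, w) \<in> fr a s \<longleftrightarrow> (c, w) \<in> fr b t"
    proof
      assume "(c, w) \<in> fr a s"
      then obtain v where v: "c \<in> C" "w \<in> S" "v \<in> S" "mul v (mul a w) = mul v (mul c s)" unfolding fr_mem by blast
      then show "(c, w) \<in> fr b t" unfolding fr_mem using rel_eucl[OF assms(1,2) v(1) assms(3,4) v(2) u v(3,4)] by blast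
    next
      assume "(c, w) \<in> fr b t"
      then obtain v where v: "c \<in> C" "w \<in> S" "v \<in> S" "mul v (mul b w) = mul v (mul c t)" unfolding fr_mem by blast
      have "mul u (mul b s) = mul u (mul a t)" using u by simp
      then show "(c, w) \<in> fr a s" unfolding fr_mem using rel_eucl[OF assms(2,1) v(1) assms(4,3) v(2) u(1) _ v(3,4)] v by blast
    qed
    then show "p \<in> fr a s \<longleftrightarrow> p \<in> fr b t" using p by simp
  qed
qed

lemma fr_scale: "a \<in> C \<Longrightarrow> s \<in> S \<Longrightarrow> p \<in> S \<Longrightarrow> fr a s = fr (mul p a) (mul p s)"
proof -
  assume a: "a \<in> C" "s \<in> S" "p \<in> S"
  have c: "s \<in> C" "p \<in> C" using a S_C by auto
  have "mul one (mul a (mul p s)) = mul one (mul (mul p a) s)" using a c by (simp add: mul_ac)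
  then have e: "\<exists>u\<in>S. mul u (mul a (mul p s)) = mul u (mul (mul p a) s)" using one_S by blast
  have pa: "mul p a \<in> C" using a c by simp
  have ps: "mul p s \<in> S" using mul_S a by simp
  show ?thesis using fr_eq[OF a(1) pa a(2) ps] e by blast
qed

lemma LC: "carrier L = {fr a s | a s. a \<in> C \<and> s \<in> S}" unfolding localization_def by simp
lemma L_rep: "X \<in> carrier L \<Longrightarrow> \<exists>a s. a \<in> C \<and> s \<in> S \<and> X = fr a s" unfolding LC by blast
lemma L_add: "hadd L X Y = {fr c (mul s t) | a s b t c.
                       a \<in> C \<and> s \<in> S \<and> b \<in> C \<and> t \<in> S \<and>
                       X = fr a s \<and> Y = fr b t \<and> c \<in> add (mul a t) (mul b s)}"
  unfolding localization_def by simp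
lemma L_zero: "hzero L = fr zero one" unfolding localization_def by simp
lemma L_one: "hone L = fr one one" unfolding localization_def by simp

lemma mul_wd:
  assumes C: "a \<in> C" "a' \<in> C" "b \<in> C" "b' \<in> C" "s \<in> S" "s' \<in> S" "t \<in> S" "t' \<in> S"
    and e: "fr a s = fr a' s'" "fr b t = fr b' t'"
  shows "fr (mul a b) (mul s t) = fr (mul a' b') (mul s' t')"
proof -
  obtain u where u: "u \<in> S" "mul u (mul a s') = mul u (mul a' s)" using e(1) fr_eq C by blast
  obtain v where v: "v \<in> S" "mul v (mul b t') = mul v (mul b' t)" using e(2) fr_eq C by blast
  have CC: "s \<in> C" "t \<in> C" "s' \<in> C" "t' \<in> C" "u \<in> C" "v \<in> C" using C u v S_C by auto
  have "mul (mul u v) (mul (mul a b) (mul s' t')) = mul (mul u (mul a s')) (mul v (mul b t'))"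
    using C CC by (simp add: mul_ac)
  also have "\<dots> = mul (mul u (mul a' s)) (mul v (mul b' t))" using u v by simp
  also have "\<dots> = mul (mul u v) (mul (mul a' b') (mul s t))" using C CC by (simp add: mul_ac)
  finally show ?thesis using fr_eq[of "mul a b" "mul a' b'" "mul s t" "mul s' t'"] C CC mul_S u v
    by (metis mul_in)
qed

lemma L_mul: assumes a: "a \<in> C" "s \<in> S" and b: "b \<in> C" "t \<in> S"
  shows "hmul L (fr a s) (fr b t) = fr (mul a b) (mul s t)"
proof -
  define p where "p = (SOME p. fst p \<in> C \<and> snd p \<in> S \<and> fr a s = fr (fst p) (snd p))"
  define q where "q = (SOME p. fst p \<in> C \<and> snd p \<in> S \<and> fr b t = fr (fst p) (snd p))"
  have p: "fst p \<in> C \<and> snd p \<in> S \<and> fr a s = fr (fst p) (snd p)"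
    unfolding p_def by (rule someI[where x="(a, s)"]) (simp add: a)
  have q: "fst q \<in> C \<and> snd q \<in> S \<and> fr b t = fr (fst q) (snd q)"
    unfolding q_def by (rule someI[where x="(b, t)"]) (simp add: b)
  have "hmul L (fr a s) (fr b t) = fr (mul (fst p) (fst q)) (mul (snd p) (snd q))"
    unfolding localization_def p_def q_def by (simp add: Let_def split_beta)
  also have "\<dots> = fr (mul a b) (mul s t)"
    using mul_wd[of "fst p" a "fst q" b "snd p" s "snd q" t] p q a b by simp
  finally show ?thesis .
qed

lemma mul_neg2: "v \<in> C \<Longrightarrow> x \<in> C \<Longrightarrow> y \<in> C \<Longrightarrow> mul v (mul (neg x) y) = neg (mul v (mul x y))"
proof -
  assume a: "v \<in> C" "x \<in> C" "y \<in> C"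
  have "mul (neg x) y = mul y (neg x)" using a mul_comm by simp
  also have "\<dots> = neg (mul y x)" using mul_neg a by simp
  also have "\<dots> = neg (mul x y)" using a mul_comm by simp
  finally have "mul v (mul (neg x) y) = mul v (neg (mul x y))" by simp
  also have "\<dots> = neg (mul v (mul x y))" using mul_neg a by simp
  finally show ?thesis .
qed

lemma L_neg: assumes a: "a \<in> C" "s \<in> S" shows "hneg L (fr a s) = fr (neg a) s"
proof -
  have sC: "s \<in> C" using a S_C by auto
  have na: "neg a \<in> C" using a by simp
  have E: "fr (neg a) s \<in> carrier L \<and> hzero L \<in> hadd L (fr a s) (fr (neg a) s)"
  proof
    show "fr (neg a) s \<in> carrier L" unfolding LC using na a by blast
  next
    have "mul (neg a) s = neg (mul a s)" using mul_neg2[of one a s] a sC by simp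
    then have z: "zero \<in> add (mul a s) (mul (neg a) s)" using neg_zero_mem[of "mul a s"] a sC by simp
    have "mul one (mul zero (mul s s)) = mul one (mul zero one)" using sC by simp
    then have e: "\<exists>u\<in>S. mul u (mul zero (mul s s)) = mul u (mul zero one)" using one_S by blast
    have ss: "mul s s \<in> S" using mul_S a by simp
    have "fr zero one = fr zero (mul s s)" using fr_eq[OF zero_in zero_in one_S ss] e by blast
    then show "hzero L \<in> hadd L (fr a s) (fr (neg a) s)"
      unfolding L_add L_zero using a na z by blast
  qed
  have U: "Y = fr (neg a) s" if Y: "Y \<in> carrier L \<and> hzero L \<in> hadd L (fr a s) Y" for Y
  proof -
    from Y obtain a' s' b t c where h: "a' \<in> C" "s' \<in> S" "b \<in> C" "t \<in> S" "fr a s = fr a' s'" "Y = fr b t"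
       "c \<in> add (mul a' t) (mul b s')" "fr zero one = fr c (mul s' t)"
      unfolding L_add L_zero by blast
    have CC: "s' \<in> C" "t \<in> C" using h S_C by auto
    have cC: "c \<in> C" using add_mem[OF h(7)] h CC by simp
    obtain u where u: "u \<in> S" "mul u (mul zero (mul s' t)) = mul u (mul c one)"
      using h(8) fr_eq[of zero c one "mul s' t"] cC one_S mul_S h by auto
    have uC: "u \<in> C" using u S_C by auto
    have uc: "mul u c = zero" using u uC cC CC by simp
    have "mul u c \<in> add (mul u (mul a' t)) (mul u (mul b s'))"
      using mul_add_mem[OF uC _ _ h(7)] h CC by simp
    then have "zero \<in> add (mul u (mul a' t)) (mul u (mul b s'))" using uc by simp
    then have "mul u (mul b s') = neg (mul u (mul a' t))" using neg_unique uC h CC by simp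
    also have "\<dots> = mul u (mul (neg a') t)" using mul_neg2 uC h CC by simp
    finally have F1: "fr b t = fr (neg a') s'" using fr_eq[of b "neg a'" t s'] u h by auto
    obtain v where v: "v \<in> S" "mul v (mul a' s) = mul v (mul a s')" using h(5) fr_eq[of a a' s s'] a h by auto
    have vC: "v \<in> C" using v S_C by auto
    have "mul v (mul (neg a') s) = neg (mul v (mul a' s))" using mul_neg2 vC h a sC by simp
    also have "\<dots> = neg (mul v (mul a s'))" using v by simp
    also have "\<dots> = mul v (mul (neg a) s')" using mul_neg2 vC h a CC by simp
    finally have F2: "fr (neg a') s' = fr (neg a) s" using fr_eq[of "neg a'" "neg a" s' s] v h a by auto
    show "Y = fr (neg a) s" using h(6) F1 F2 by simp
  qed
  show ?thesis unfolding hneg_def[of L]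
    by (rule the_equality[where P="\<lambda>Y. Y \<in> carrier L \<and> hzero L \<in> hadd L (fr a s) Y", OF E U])
qed

lemma hpow_S: "t \<in> S \<Longrightarrow> hpow R t k \<in> S"
  by (induction k) (auto simp: one_S mul_S)

lemma L_pow: "b \<in> C \<Longrightarrow> t \<in> S \<Longrightarrow> hpow L (fr b t) k = fr (hpow R b k) (hpow R t k)"
proof (induction k)
  case 0 then show ?case using L_one by simp
next
  case (Suc k) then show ?case using L_mul[of b t "hpow R b k" "hpow R t k"] hpow_S by simp
qed

theorem part2:
  assumes PT: "phi_primary R \<phi> T"
    and H: "loc_set R S (\<phi> T) \<subseteq> phi_loc R S \<phi> (loc_set R S T)"
  shows "phi_primary L (phi_loc R S \<phi>) (loc_set R S T)"
proof -
  have HT: "hyperideal R T" using PT unfolding phi_primary_def by blast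
  have TC: "T \<subseteq> C" using hi_sub[OF HT] .
  have key: "\<exists>p\<in>S. mul p a \<in> T" if A: "a \<in> C" "s \<in> S" "fr a s \<in> loc_set R S T" for a s
  proof -
    obtain t w where t: "t \<in> T" "w \<in> S" "fr a s = fr t w" using A(3) unfolding loc_set_def by blast
    have tC: "t \<in> C" using t(1) TC by blast
    have wC: "w \<in> C" "s \<in> C" using t(2) A(2) S_C by auto
    obtain u where u: "u \<in> S" "mul u (mul a w) = mul u (mul t s)"
      using fr_eq[OF A(1) tC A(2) t(2)] t(3) by blast
    have uC: "u \<in> C" using u S_C by auto
    have "mul (mul u w) a = mul u (mul a w)" using uC wC A(1) by (simp add: mul_ac)
    also have "\<dots> = mul u (mul t s)" by (rule u(2))
    finally have e: "mul (mul u w) a = mul u (mul t s)" .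
    have "mul t s \<in> T" using hi_mul2[OF HT wC(2) t(1)] .
    then have "mul u (mul t s) \<in> T" using hi_mul[OF HT uC] by blast
    then have "mul (mul u w) a \<in> T" using e by simp
    then show ?thesis using mul_S[OF u(1) t(2)] by (rule_tac bexI)
  qed
  have conv: "fr a s \<in> loc_set R S T" if A: "a \<in> C" "s \<in> S" "p \<in> S" "mul p a \<in> T" for a s p
  proof -
    have "fr a s = fr (mul p a) (mul p s)" using fr_scale[OF A(1-3)] .
    moreover have "mul p s \<in> S" using mul_S A by blast
    ultimately show ?thesis using A(4) unfolding loc_set_def by blast
  qed
  have hi: "hyperideal L (loc_set R S T)"
    unfolding hyperideal_def
  proof (intro conjI ballI)
    show "loc_set R S T \<subseteq> carrier L" unfolding LC loc_set_def using TC by blast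
    show "loc_set R S T \<noteq> {}" unfolding loc_set_def using hi_zero[OF HT] one_S by blast
  next
    fix X Y assume X: "X \<in> loc_set R S T" and Y: "Y \<in> loc_set R S T"
    obtain a s where a: "a \<in> T" "s \<in> S" "X = fr a s" using X unfolding loc_set_def by blast
    obtain b t where b: "b \<in> T" "t \<in> S" "Y = fr b t" using Y unfolding loc_set_def by blast
    have bC: "b \<in> C" using b TC by blast
    have nbT: "neg b \<in> T" using hi_neg[OF HT b(1)] .
    show "hadd L X (hneg L Y) \<subseteq> loc_set R S T"
    proof
      fix Z assume "Z \<in> hadd L X (hneg L Y)"
      then have "Z \<in> hadd L (fr a s) (fr (neg b) t)" using a(3) b(3) L_neg[OF bC b(2)] by simp
      then obtain a'' s'' b'' t'' c where h: "a'' \<in> C" "s'' \<in> S" "b'' \<in> C" "t'' \<in> S"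
          "fr a s = fr a'' s''" "fr (neg b) t = fr b'' t''" "c \<in> add (mul a'' t'') (mul b'' s'')"
          "Z = fr c (mul s'' t'')"
        unfolding L_add by blast
      have "fr a'' s'' \<in> loc_set R S T" using h(5) a unfolding loc_set_def by blast
      then obtain p where p: "p \<in> S" "mul p a'' \<in> T" using key[OF h(1,2)] by blast
      have "fr b'' t'' \<in> loc_set R S T" using h(6) nbT b(2) unfolding loc_set_def by blast
      then obtain q where q: "q \<in> S" "mul q b'' \<in> T" using key[OF h(3,4)] by blast
      have CC: "p \<in> C" "q \<in> C" "s'' \<in> C" "t'' \<in> C" using p q h S_C by auto
      have pqC: "mul p q \<in> C" using CC by simp
      have cC: "c \<in> C" using add_mem[OF h(7)] h CC by simp
      have m: "mul (mul p q) c \<in> add (mul (mul p q) (mul a'' t'')) (mul (mul p q) (mul b'' s''))"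
        using mul_add_mem[OF pqC _ _ h(7)] h CC by simp
      have e1: "mul (mul p q) (mul a'' t'') = mul (mul q t'') (mul p a'')" using CC h by (simp add: mul_ac)
      have e2: "mul (mul p q) (mul b'' s'') = mul (mul p s'') (mul q b'')" using CC h by (simp add: mul_ac)
      have T1: "mul (mul q t'') (mul p a'') \<in> T" using hi_mul[OF HT _ p(2)] CC by simp
      have T2: "mul (mul p s'') (mul q b'') \<in> T" using hi_mul[OF HT _ q(2)] CC by simp
      have "mul (mul p q) c \<in> add (mul (mul q t'') (mul p a'')) (mul (mul p s'') (mul q b''))"
        using m e1 e2 by simp
      then have "mul (mul p q) c \<in> T" using hi_add[OF HT T1 T2] by blast
      then have "fr c (mul s'' t'') \<in> loc_set R S T"
        using conv[OF cC mul_S[OF h(2) h(4)] mul_S[OF p(1) q(1)]] by blast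
      then show "Z \<in> loc_set R S T" using h(8) by simp
    qed
  next
    fix r X assume r: "r \<in> carrier L" and X: "X \<in> loc_set R S T"
    obtain a s where a: "a \<in> C" "s \<in> S" "r = fr a s" using L_rep[OF r] by blast
    obtain t w where t: "t \<in> T" "w \<in> S" "X = fr t w" using X unfolding loc_set_def by blast
    have tC: "t \<in> C" using t(1) TC by blast
    have "hmul L r X = fr (mul a t) (mul s w)" using L_mul[OF a(1,2) tC t(2)] a(3) t(3) by simp
    moreover have "mul a t \<in> T" using hi_mul[OF HT a(1) t(1)] .
    moreover have "mul s w \<in> S" using mul_S a t by blast
    ultimately show "hmul L r X \<in> loc_set R S T" unfolding loc_set_def by blast
  qed
  show ?thesis unfolding phi_primary_def
  proof (intro conjI hi ballI impI)
    fix X Y assume X: "X \<in> carrier L" and Y: "Y \<in> carrier L"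
      and h: "hmul L X Y \<in> loc_set R S T \<and> hmul L X Y \<notin> phi_loc R S \<phi> (loc_set R S T)"
    obtain a s where a: "a \<in> C" "s \<in> S" "X = fr a s" using L_rep[OF X] by blast
    obtain b t where b: "b \<in> C" "t \<in> S" "Y = fr b t" using L_rep[OF Y] by blast
    have XY: "hmul L X Y = fr (mul a b) (mul s t)" using L_mul[OF a(1,2) b(1,2)] a(3) b(3) by simp
    have st: "mul s t \<in> S" using mul_S a b by blast
    have abC: "mul a b \<in> C" using a b by simp
    obtain p where p: "p \<in> S" "mul p (mul a b) \<in> T" using key[OF abC st] h XY by auto
    have pC: "p \<in> C" using p S_C by auto
    have pab: "mul (mul p a) b = mul p (mul a b)" using mul_assoc pC a b by simp
    have notphi: "mul (mul p a) b \<notin> \<phi> T"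
    proof
      assume inphi: "mul (mul p a) b \<in> \<phi> T"
      have "fr (mul a b) (mul s t) = fr (mul p (mul a b)) (mul p (mul s t))" using fr_scale[OF abC st p(1)] .
      moreover have "mul p (mul s t) \<in> S" using mul_S p st by blast
      ultimately have "fr (mul a b) (mul s t) \<in> loc_set R S (\<phi> T)" unfolding loc_set_def using inphi pab by auto
      then have "fr (mul a b) (mul s t) \<in> phi_loc R S \<phi> (loc_set R S T)" using H by blast
      then show False using h XY by simp
    qed
    have paC: "mul p a \<in> C" using pC a by simp
    have "mul (mul p a) b \<in> T" using pab p by simp
    then have "mul p a \<in> T \<or> (\<exists>k\<ge>1. hpow R b k \<in> T)"
      using PT paC b(1) notphi unfolding phi_primary_def by blast
    then show "X \<in> loc_set R S T \<or> (\<exists>k\<ge>1. hpow L Y k \<in> loc_set R S T)"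
    proof
      assume "mul p a \<in> T"
      then have "fr a s \<in> loc_set R S T" using conv[OF a(1,2) p(1)] by blast
      then show ?thesis using a(3) by simp
    next
      assume "\<exists>k\<ge>1. hpow R b k \<in> T"
      then obtain k where k: "k \<ge> 1" "hpow R b k \<in> T" by blast
      have "hpow L Y k = fr (hpow R b k) (hpow R t k)" using L_pow[OF b(1,2)] b(3) by simp
      moreover have "hpow R t k \<in> S" using hpow_S[OF b(2)] .
      ultimately have "hpow L Y k \<in> loc_set R S T" using k(2) unfolding loc_set_def by blast
      then show ?thesis using k(1) by blast
    qed
  qed
qed

end

theorem mainTheorem14:
  fixes R :: "'a hyperring" and \<phi> :: "'a set \<Rightarrow> 'a set" and T :: "'a set"
  assumes "krasner_hyperring R"
    and "reduction_fun R \<phi>"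
    and "phi_primary R \<phi> T" and "T \<noteq> carrier R"
  shows "(\<forall>M. hyperideal R M \<and> M \<subseteq> T \<longrightarrow>
            phi_primary (quot_hyperring R M) (phi_quot R M \<phi>) (quot_set R M T)) \<and>
         (\<forall>S. mult_closed R S \<and> T \<inter> S = {} \<and> loc_set R S (\<phi> T) \<subseteq> phi_loc R S \<phi> (loc_set R S T) \<longrightarrow>
            phi_primary (localization R S) (phi_loc R S \<phi>) (loc_set R S T))"
proof (intro conjI allI impI)
  fix M assume H: "hyperideal R M \<and> M \<subseteq> T"
  have K: "khM R M" unfolding khM_def khM_axioms_def kh_def using assms(1) H by blast
  show "phi_primary (quot_hyperring R M) (phi_quot R M \<phi>) (quot_set R M T)"
    using khM.part1[OF K assms(3)] H by blast
next
  fix S assume H: "mult_closed R S \<and> T \<inter> S = {} \<and> loc_set R S (\<phi> T) \<subseteq> phi_loc R S \<phi> (loc_set R S T)"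
  have K: "khS R S" unfolding khS_def khS_axioms_def kh_def using assms(1) H by blast
  show "phi_primary (localization R S) (phi_loc R S \<phi>) (loc_set R S T)"
    using khS.part2[OF K assms(3)] H by blast
qed

end
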